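(* With notation as in the context, define for $X,Y\in\zeta_s^+(V_0)$ the product $X\circ Y:=(Y+s)(X+Y)^{-1}(X+s)-s$. Then for all $x,y\in\mathrm{H}(V_0^s)$ one has $xy\in\mathrm{H}(V_0^s)$ and $a_{xy}=a_x\circ a_y$.
   Context: $V_0=V_0^+\oplus V_0^-$ is an orthogonal decomposition of a finite-dimensional complex Hermitian space, $s=\mathrm{Id}_{V_0^+}\oplus(-\mathrm{Id}_{V_0^-})$, $\mathrm{H}(V_0^s)=\{g\in\mathrm{GL}(V_0):g^\dagger sg<s\}$, $\zeta_s^+(V_0)=\{X\in\mathrm{End}(V_0):\tfrac12(X+X^\dagger)>0,\ \mathrm{Det}(X+s)\ne0\}$, and $a_h=s(1+h)(1-h)^{-1}$ for $h\in\mathrm{H}(V_0^s)$ (with $1=\mathrm{Id}_{V_0}$); $1-h$ is invertible and $a_h\in\zeta_s^+(V_0)$. Note $X+Y$ is invertible for $X,Y\in\zeta_s^+(V_0)$ since $\mathfrak{Re}(X+Y)>0$. *)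

theory Defs
  imports "HOL-Analysis.Analysis"
begin

text \<open>V_0 = complex^'n with the standard Hermitian inner product; endomorphisms are
  matrices complex^'n^'n.\<close>

definition cinner :: "complex ^'n \<Rightarrow> complex ^'n \<Rightarrow> complex" where
  "cinner x y = (\<Sum>i\<in>UNIV. cnj (x $ i) * y $ i)"

definition madj :: "complex ^'n^'n \<Rightarrow> complex ^'n^'n" where
  "madj A = (\<chi> i j. cnj (A $ j $ i))"

definition hermitian :: "complex ^'n^'n \<Rightarrow> bool" where
  "hermitian A \<longleftrightarrow> madj A = A"

definition posdef :: "complex ^'n^'n \<Rightarrow> bool" where
  "posdef A \<longleftrightarrow> hermitian A \<and> (\<forall>x. x \<noteq> 0 \<longrightarrow> 0 < Re (cinner x (A *v x)))"

definition herm_less :: "complex ^'n^'n \<Rightarrow> complex ^'n^'n \<Rightarrow> bool" where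
  "herm_less A B \<longleftrightarrow> hermitian A \<and> hermitian B \<and> posdef (B - A)"

text \<open>s = Id on V_0^+ and -Id on V_0^- for an orthogonal decomposition V_0 = V_0^+ + V_0^-:
  equivalently, a Hermitian involution.\<close>
definition sign_op :: "complex ^'n^'n \<Rightarrow> bool" where
  "sign_op s \<longleftrightarrow> hermitian s \<and> s ** s = mat 1"

definition Hs :: "complex ^'n^'n \<Rightarrow> (complex ^'n^'n) set" where
  "Hs s = {g. invertible g \<and> herm_less (madj g ** s ** g) s}"

definition zeta_plus :: "complex ^'n^'n \<Rightarrow> (complex ^'n^'n) set" where
  "zeta_plus s = {X. posdef ((1/2::real) *\<^sub>R (X + madj X)) \<and> det (X + s) \<noteq> 0}"

definition a_map :: "complex ^'n^'n \<Rightarrow> complex ^'n^'n \<Rightarrow> complex ^'n^'n" where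
  "a_map s h = s ** (mat 1 + h) ** matrix_inv (mat 1 - h)"

definition zeta_prod :: "complex ^'n^'n \<Rightarrow> complex ^'n^'n \<Rightarrow> complex ^'n^'n \<Rightarrow> complex ^'n^'n" where
  "zeta_prod s X Y = (Y + s) ** matrix_inv (X + Y) ** (X + s) - s"

end

theory Submission
  imports Defs
begin

lemma mm_diff_l: "(A::complex^'n^'n) ** (B - C) = A ** B - A ** C"
  by (simp add: matrix_matrix_mult_def vec_eq_iff sum_subtractf right_diff_distrib)

lemma mm_add_r: "((A::complex^'n^'n) + B) ** C = A ** C + B ** C"
  by (simp add: matrix_matrix_mult_def vec_eq_iff sum.distrib distrib_right)

lemma mm_diff_r: "((A::complex^'n^'n) - B) ** C = A ** C - B ** C"
  by (simp add: matrix_matrix_mult_def vec_eq_iff sum_subtractf left_diff_distrib)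

lemma mm_scale_l: "((k::real) *\<^sub>R (A::complex^'n^'n)) ** B = k *\<^sub>R (A ** B)"
  by (simp add: matrix_matrix_mult_def vec_eq_iff scaleR_sum_right)

lemma mm_scale_r: "(A::complex^'n^'n) ** ((k::real) *\<^sub>R B) = k *\<^sub>R (A ** B)"
  by (simp add: matrix_matrix_mult_def vec_eq_iff scaleR_sum_right)

lemma madj_mult: "madj ((A::complex^'n^'n) ** B) = madj B ** madj A"
  by (simp add: madj_def matrix_matrix_mult_def vec_eq_iff mult.commute)

lemma madj_add: "madj ((A::complex^'n^'n) + B) = madj A + madj B"
  by (simp add: madj_def vec_eq_iff)

lemma madj_diff: "madj ((A::complex^'n^'n) - B) = madj A - madj B"
  by (simp add: madj_def vec_eq_iff)

lemma madj_madj: "madj (madj (A::complex^'n^'n)) = A"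
  by (simp add: madj_def vec_eq_iff)

lemma cinner_adj: "cinner x ((A::complex^'n^'n) *v y) = cinner (madj A *v x) y"
proof -
  have "cinner x (A *v y) = (\<Sum>i\<in>UNIV. \<Sum>j\<in>UNIV. cnj (x $ i) * (A $ i $ j * y $ j))"
    unfolding cinner_def matrix_vector_mult_def by (simp add: sum_distrib_left)
  also have "\<dots> = (\<Sum>j\<in>UNIV. \<Sum>i\<in>UNIV. cnj (x $ i) * (A $ i $ j * y $ j))"
    by (rule sum.swap)
  also have "\<dots> = cinner (madj A *v x) y"
    unfolding cinner_def matrix_vector_mult_def madj_def
    by (simp add: sum_distrib_right sum_distrib_left mult_ac)
  finally show ?thesis .
qed

lemma cinner_diff: "cinner x (a - b) = cinner x a - cinner x b"
  by (simp add: cinner_def sum_subtractf right_diff_distrib)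

lemma cinner_add: "cinner x (a + b) = cinner x a + cinner x b"
  by (simp add: cinner_def sum.distrib distrib_left)

lemma inv_props:
  assumes "invertible (A::complex^'n^'n)"
  shows "A ** matrix_inv A = mat 1" "matrix_inv A ** A = mat 1"
  using assms unfolding invertible_def matrix_inv_def
  by (metis (mono_tags, lifting) someI_ex)+

lemma inv_unique:
  assumes "(M::complex^'n^'n) ** N = mat 1"
  shows "invertible M" "matrix_inv M = N"
proof -
  show i: "invertible M" using assms invertible_right_inverse by blast
  have "matrix_inv M = matrix_inv M ** (M ** N)" using assms by simp
  also have "\<dots> = N" using inv_props(2)[OF i] by (simp add: matrix_mul_assoc)
  finally show "matrix_inv M = N" .
qed

lemma posdef_add: "posdef A \<Longrightarrow> posdef B \<Longrightarrow> posdef ((A::complex^'n^'n) + B)"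
  unfolding posdef_def hermitian_def
  by (simp add: madj_add matrix_vector_mult_add_rdistrib cinner_add add_pos_pos)

lemma posdef_congr:
  assumes "posdef (P::complex^'n^'n)" "invertible y"
  shows "posdef (madj y ** P ** y)"
  unfolding posdef_def hermitian_def
proof (intro conjI allI impI)
  show "madj (madj y ** P ** y) = madj y ** P ** y"
    using assms(1) by (simp add: madj_mult madj_madj posdef_def hermitian_def matrix_mul_assoc)
  fix x :: "complex^'n" assume "x \<noteq> 0"
  have "y *v x \<noteq> 0"
    using inj_matrix_vector_mult[OF assms(2)] \<open>x \<noteq> 0\<close>
    by (metis injD matrix_vector_mult_0_right)
  hence "0 < Re (cinner (y *v x) (P *v (y *v x)))" using assms(1) by (simp add: posdef_def)
  also have "cinner (y *v x) (P *v (y *v x)) = cinner x ((madj y ** P ** y) *v x)"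
    by (simp add: cinner_adj madj_madj matrix_vector_mul_assoc[symmetric])
  finally show "0 < Re (cinner x ((madj y ** P ** y) *v x))" .
qed


lemma Hs_one_minus_inv:
  assumes "g \<in> Hs (s::complex^'n^'n)"
  shows "invertible (mat 1 - g)"
proof -
  have pd: "posdef (s - madj g ** s ** g)" using assms by (simp add: Hs_def herm_less_def)
  have "\<forall>v. (mat 1 - g) *v v = 0 \<longrightarrow> v = 0"
  proof (intro allI impI, rule ccontr)
    fix v :: "complex^'n" assume h: "(mat 1 - g) *v v = 0" and v: "v \<noteq> 0"
    have "v - g *v v = 0" using h by (simp only: matrix_vector_mult_diff_rdistrib matrix_vector_mul_lid)
    hence gv: "g *v v = v" by (metis eq_iff_diff_eq_0)
    have e1: "(madj g ** s ** g) *v v = madj g *v (s *v v)"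
      by (simp add: matrix_vector_mul_assoc[symmetric] gv)
    have e2: "cinner v (madj g *v (s *v v)) = cinner v (s *v v)"
      using cinner_adj[of v "madj g" "s *v v"] by (simp add: madj_madj gv)
    have "0 < Re (cinner v ((s - madj g ** s ** g) *v v))" using pd v by (simp add: posdef_def)
    also have "cinner v ((s - madj g ** s ** g) *v v) = 0"
      by (simp only: matrix_vector_mult_diff_rdistrib cinner_diff e1 e2 diff_self)
    finally show False by simp
  qed
  then show ?thesis
    unfolding invertible_left_inverse matrix_left_invertible_ker(1) .
qed

lemma Hs_mult:
  assumes s: "sign_op s" and x: "x \<in> Hs s" and y: "y \<in> Hs s"
  shows "x ** y \<in> Hs s"
proof -
  have hs: "madj s = s" using s by (simp add: sign_op_def hermitian_def)
  have ix: "invertible x" and iy: "invertible y" using x y by (auto simp: Hs_def)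
  have px: "posdef (s - madj x ** s ** x)" using x by (simp add: Hs_def herm_less_def)
  have py: "posdef (s - madj y ** s ** y)" using y by (simp add: Hs_def herm_less_def)
  have eq: "s - madj (x ** y) ** s ** (x ** y) =
      (s - madj y ** s ** y) + madj y ** (s - madj x ** s ** x) ** y"
    by (simp add: madj_mult mm_diff_l mm_diff_r matrix_mul_assoc)
  have pd: "posdef (s - madj (x ** y) ** s ** (x ** y))"
    unfolding eq by (intro posdef_add py posdef_congr px iy)
  have h1: "hermitian (madj (x ** y) ** s ** (x ** y))"
    by (simp add: hermitian_def madj_mult madj_madj hs matrix_mul_assoc)
  have h2: "hermitian s" using hs by (simp add: hermitian_def)
  have "invertible (x ** y)" by (rule invertible_mult[OF ix iy])
  then show ?thesis unfolding Hs_def herm_less_def using h1 h2 pd by blast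
qed

lemma plus_s:
  assumes "invertible (mat 1 - x)"
  shows "(s::complex^'n^'n) ** (mat 1 + x) ** matrix_inv (mat 1 - x) + s
     = 2 *\<^sub>R (s ** matrix_inv (mat 1 - x))"
proof -
  let ?A = "mat 1 - x" let ?Ai = "matrix_inv ?A"
  have "s = s ** ?A ** ?Ai" using inv_props(1)[OF assms] by (simp add: matrix_mul_assoc[symmetric])
  hence "s ** (mat 1 + x) ** ?Ai + s = s ** (mat 1 + x) ** ?Ai + s ** ?A ** ?Ai" by simp
  also have "\<dots> = s ** ((mat 1 + x) + ?A) ** ?Ai"
    unfolding matrix_add_ldistrib mm_add_r ..
  also have "(mat 1 + x) + ?A = mat 1 + (mat 1 :: complex^'n^'n)"
    by (simp add: algebra_simps)
  also have "\<dots> = 2 *\<^sub>R (mat 1 :: complex^'n^'n)"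
    by (simp only: scaleR_2)
  finally show ?thesis by (simp only: mm_scale_l mm_scale_r matrix_mul_rid)
qed

lemma grp_helper: "(a::'a::ab_group_add) - d = (a - b) + (a - c) - ((a - b) - (c - d))"
  by (simp add: algebra_simps)

lemma cancel_r:
  assumes "(P::complex^'n^'n) ** Q = mat 1"
  shows "M ** P ** Q = M"
  by (metis assms matrix_mul_assoc matrix_mul_rid)

theorem mainTheorem13:
  fixes s x y :: "complex ^'n^'n"
  assumes "sign_op s"
    and "x \<in> Hs s" and "y \<in> Hs s"
  shows "x ** y \<in> Hs s \<and> a_map s (x ** y) = zeta_prod s (a_map s x) (a_map s y)"
proof
  show xy: "x ** y \<in> Hs s" by (rule Hs_mult[OF assms])
  define A where "A = mat 1 - x"
  define B where "B = mat 1 - y"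
  define C where "C = mat 1 - x ** y"
  define Ai where "Ai = matrix_inv A"
  define Bi where "Bi = matrix_inv B"
  define Ci where "Ci = matrix_inv C"
  have iA: "invertible A" unfolding A_def by (rule Hs_one_minus_inv[OF assms(2)])
  have iB: "invertible B" unfolding B_def by (rule Hs_one_minus_inv[OF assms(3)])
  have iC: "invertible C" unfolding C_def by (rule Hs_one_minus_inv[OF xy])
  have A1: "A ** Ai = mat 1" "Ai ** A = mat 1" using inv_props[OF iA] by (simp_all add: Ai_def)
  have B1: "B ** Bi = mat 1" "Bi ** B = mat 1" using inv_props[OF iB] by (simp_all add: Bi_def)
  have C1: "C ** Ci = mat 1" "Ci ** C = mat 1" using inv_props[OF iC] by (simp_all add: Ci_def)
  have ss: "s ** s = mat 1" using assms(1) by (simp add: sign_op_def)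
  define X where "X = a_map s x"
  define Y where "Y = a_map s y"
  have hX: "X + s = 2 *\<^sub>R (s ** Ai)"
    using plus_s[OF iA[unfolded A_def]] by (simp add: X_def a_map_def Ai_def A_def)
  have hY: "Y + s = 2 *\<^sub>R (s ** Bi)"
    using plus_s[OF iB[unfolded B_def]] by (simp add: Y_def a_map_def Bi_def B_def)
  have hC: "a_map s (x ** y) + s = 2 *\<^sub>R (s ** Ci)"
    using plus_s[OF iC[unfolded C_def]] by (simp add: a_map_def Ci_def C_def)
  have AB: "A ** B = (mat 1 - x) - (y - x ** y)"
    unfolding A_def B_def by (simp only: mm_diff_r mm_diff_l matrix_mul_lid matrix_mul_rid)
  have C_eq: "C = A + B - A ** B"
    unfolding AB unfolding A_def B_def C_def by (rule grp_helper)
  have "Ai ** C ** Bi = (Ai ** A) ** Bi + Ai ** (B ** Bi) - (Ai ** A) ** (B ** Bi)"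
    by (simp only: C_eq matrix_add_ldistrib mm_diff_l mm_add_r mm_diff_r matrix_mul_assoc)
  hence key: "Ai ** C ** Bi = Bi + Ai - mat 1"
    by (simp only: A1 B1 matrix_mul_lid matrix_mul_rid add.commute)
  have "X + Y = (X + s) + (Y + s) - 2 *\<^sub>R s" by (simp only: scaleR_2) (simp add: algebra_simps)
  also have "\<dots> = 2 *\<^sub>R (s ** Ai) + 2 *\<^sub>R (s ** Bi) - 2 *\<^sub>R (s ** mat 1)"
    by (simp only: hX hY matrix_mul_rid)
  also have "\<dots> = 2 *\<^sub>R (s ** (Bi + Ai - mat 1))"
    by (simp only: matrix_add_ldistrib mm_diff_l scaleR_right_diff_distrib scaleR_right_distrib)
      (simp add: algebra_simps)
  finally have "X + Y = 2 *\<^sub>R (s ** (Ai ** C ** Bi))" unfolding key .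
  hence hXY: "X + Y = 2 *\<^sub>R (s ** Ai ** C ** Bi)" by (simp only: matrix_mul_assoc)
  define Z where "Z = (1/2::real) *\<^sub>R (B ** Ci ** A ** s)"
  have "(X + Y) ** Z = s ** Ai ** C ** Bi ** B ** Ci ** A ** s"
    by (simp add: hXY Z_def mm_scale_l mm_scale_r matrix_mul_assoc)
  also have "\<dots> = mat 1"
    by (simp only: cancel_r[OF B1(2)] cancel_r[OF C1(1)] cancel_r[OF A1(2)] ss)
  finally have ZZ: "matrix_inv (X + Y) = Z" by (rule inv_unique(2))
  have "(Y + s) ** Z ** (X + s) = 2 *\<^sub>R (s ** Bi ** B ** Ci ** A ** s ** s ** Ai)"
    by (simp add: hX hY Z_def mm_scale_l mm_scale_r matrix_mul_assoc)
  also have "\<dots> = 2 *\<^sub>R (s ** Ci)"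
    by (simp only: cancel_r[OF B1(2)] cancel_r[OF ss] cancel_r[OF A1(1)])
  finally have "(Y + s) ** Z ** (X + s) = 2 *\<^sub>R (s ** Ci)" .
  then show "a_map s (x ** y) = zeta_prod s (a_map s x) (a_map s y)"
    unfolding zeta_prod_def X_def[symmetric] Y_def[symmetric] ZZ
    using hC by (metis add_diff_cancel_right')
qed

end
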